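(* Let $1\le m\le d$ and $\nu>0$. Let $\mathcal U(\nu)$ be the uniform distribution on the sphere $\{x\in\mathbb{R}^d:\|x\|_2=\nu\}$ and $\mathcal P$ the uniform distribution over rank-$m$ orthogonal projection matrices on $\mathbb{R}^d$. Then, with the infimum over all (possibly randomized) measurable estimators $T$, $$\inf_T\sup_{x:\|x\|_2=\nu}\mathbb E_{\Pi\sim\mathcal P}\|T(\Pi,\Pi x)-x\|_2^2\ \ge\ \inf_T\mathbb E_{x\sim\mathcal U(\nu)}\mathbb E_{\Pi\sim\mathcal P}\|T(\Pi,\Pi x)-x\|_2^2\ \ge\ \nu^2\Big(1-\frac md\Big).$$
   Context: The uniform distribution over rank-$m$ orthogonal projections is that of the orthogonal projection onto a Haar-uniform random $m$-dimensional subspace, independent of $x$; expectations also include any internal randomness of $T$. *)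

theory Defs
  imports "HOL-Analysis.Analysis" "HOL-Probability.Probability"
begin

definition rank_proj :: "nat \<Rightarrow> (real^'n^'n) set" where
  "rank_proj m = {A. transpose A = A \<and> A ** A = A \<and> rank A = m}"

text \<open>Uniform (rotation-invariant) probability distribution on the sphere of radius nu.
  By uniqueness of the invariant probability measure on the sphere this is exactly the
  normalised surface measure.\<close>
definition uniform_sphere_measure :: "real \<Rightarrow> (real^'n) measure \<Rightarrow> bool" where
  "uniform_sphere_measure \<nu> U \<longleftrightarrow>
     prob_space U \<and> sets U = sets borel \<and> emeasure U (sphere 0 \<nu>) = 1 \<and>
     (\<forall>Q::real^'n^'n. orthogonal_matrix Q \<longrightarrow> distr U borel (\<lambda>x. Q *v x) = U)"

text \<open>Uniform (Haar) distribution over rank-m orthogonal projections: a probability measure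
  concentrated on rank-m projections, invariant under conjugation by orthogonal matrices
  (the unique O(d)-invariant probability measure on the Grassmannian).\<close>
definition uniform_proj_measure :: "nat \<Rightarrow> (real^'n^'n) measure \<Rightarrow> bool" where
  "uniform_proj_measure m P \<longleftrightarrow>
     prob_space P \<and> sets P = sets borel \<and> emeasure P (rank_proj m) = 1 \<and>
     (\<forall>Q::real^'n^'n. orthogonal_matrix Q \<longrightarrow>
        distr P borel (\<lambda>A. Q ** A ** transpose Q) = P)"

text \<open>Randomized measurable estimators using internal randomness r drawn from R
  (independent of x and Pi): T r Pi y is the estimate from (Pi, y).\<close>
definition estimators :: "'r measure \<Rightarrow>
    ('r \<Rightarrow> real^'n^'n \<Rightarrow> real^'n \<Rightarrow> real^'n) set" where
  "estimators R = {T. (\<lambda>(r, A, y). T r A y) \<in>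
       borel_measurable (R \<Otimes>\<^sub>M (borel \<Otimes>\<^sub>M borel))}"

definition risk :: "'r measure \<Rightarrow> (real^'n^'n) measure \<Rightarrow>
    ('r \<Rightarrow> real^'n^'n \<Rightarrow> real^'n \<Rightarrow> real^'n) \<Rightarrow> real^'n \<Rightarrow> ennreal" where
  "risk R P T x = (\<integral>\<^sup>+ A. (\<integral>\<^sup>+ r. ennreal ((norm (T r A (A *v x) - x))\<^sup>2) \<partial>R) \<partial>P)"

end

theory Submission
  imports Defs
begin


lemma meas_lin: fixes f :: "real^'n \<Rightarrow> real^'n" assumes "linear f"
  shows "f \<in> borel_measurable borel"
  using assms by (intro borel_measurable_continuous_onI linear_continuous_on linear_conv_bounded_linear[THEN iffD1])

lemma sets_U: "uniform_sphere_measure \<nu> U \<Longrightarrow> sets U = sets borel"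
  by (simp add: uniform_sphere_measure_def)

lemma inv_integral:
  fixes g :: "real^'n \<Rightarrow> real"
  assumes U: "uniform_sphere_measure \<nu> U" and f: "orthogonal_transformation f"
    and g: "g \<in> borel_measurable borel"
  shows "(\<integral> x. g x \<partial>U) = (\<integral> x. g (f x) \<partial>U)"
proof -
  have lf: "linear f" using f by (simp add: orthogonal_transformation_def)
  have om: "orthogonal_matrix (matrix f)" using f orthogonal_transformation_matrix by blast
  have d: "distr U borel (\<lambda>x. matrix f *v x) = U" using U om by (simp add: uniform_sphere_measure_def)
  have mf: "(\<lambda>x. matrix f *v x) = f" using lf by simp
  have fm: "f \<in> measurable U borel" using meas_lin[OF lf] measurable_cong_sets[OF sets_U[OF U] refl] by blast
  have "(\<integral> x. g x \<partial>U) = (\<integral> x. g x \<partial>distr U borel f)" using d mf by simp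
  also have "\<dots> = (\<integral> x. g (f x) \<partial>U)" by (rule integral_distr[OF fm g])
  finally show ?thesis .
qed

lemma inv_nn_integral:
  fixes g :: "real^'n \<Rightarrow> ennreal"
  assumes U: "uniform_sphere_measure \<nu> U" and f: "orthogonal_transformation f"
    and g: "g \<in> borel_measurable borel"
  shows "(\<integral>\<^sup>+ x. g x \<partial>U) = (\<integral>\<^sup>+ x. g (f x) \<partial>U)"
proof -
  have lf: "linear f" using f by (simp add: orthogonal_transformation_def)
  have om: "orthogonal_matrix (matrix f)" using f orthogonal_transformation_matrix by blast
  have d: "distr U borel (\<lambda>x. matrix f *v x) = U" using U om by (simp add: uniform_sphere_measure_def)
  have mf: "(\<lambda>x. matrix f *v x) = f" using lf by simp
  have fm: "f \<in> measurable U borel" using meas_lin[OF lf] measurable_cong_sets[OF sets_U[OF U] refl] by blast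
  have "(\<integral>\<^sup>+ x. g x \<partial>U) = (\<integral>\<^sup>+ x. g x \<partial>distr U borel f)" using d mf by simp
  also have "\<dots> = (\<integral>\<^sup>+ x. g (f x) \<partial>U)" by (rule nn_integral_distr[OF fm]) (simp add: g)
  finally show ?thesis .
qed

lemma AE_sphere:
  assumes U: "uniform_sphere_measure \<nu> U"
  shows "AE x in U. norm x = \<nu>"
proof -
  interpret prob_space U using U by (simp add: uniform_sphere_measure_def)
  have "prob (sphere 0 \<nu>) = 1" using U by (simp add: uniform_sphere_measure_def measure_def)
  then have "AE x in U. x \<in> sphere 0 \<nu>" by (rule AE_prob_1)
  then show ?thesis by (auto simp: dist_norm)
qed

lemma ot_flip: "orthogonal_transformation (\<lambda>x::real^'n. \<chi> i. if i = j then - x$i else x$i)"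
  unfolding orthogonal_transformation_def
proof
  show "linear (\<lambda>x::real^'n. \<chi> i. if i = j then - x$i else x$i)"
    by (rule linearI) (auto simp: vec_eq_iff)
  show "\<forall>v w. (\<chi> i. if i = j then - v$i else v$i) \<bullet> (\<chi> i. if i = j then - w$i else w$i) = v \<bullet> (w::real^'n)"
    by (auto simp: inner_vec_def intro!: sum.cong)
qed

lemma ot_perm: assumes "bij p"
  shows "orthogonal_transformation (\<lambda>x::real^'n. \<chi> i. x $ p i)"
  unfolding orthogonal_transformation_def
proof
  show "linear (\<lambda>x::real^'n. \<chi> i. x $ p i)"
    by (rule linearI) (auto simp: vec_eq_iff)
  show "\<forall>v w. (\<chi> i. v $ p i) \<bullet> (\<chi> i. w $ p i) = v \<bullet> (w::real^'n)"
  proof (intro allI)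
    fix v w :: "real^'n"
    have "(\<Sum>i\<in>UNIV. v $ p i * w $ p i) = (\<Sum>i\<in>UNIV. v $ i * w $ i)"
      using sum.reindex_bij_betw[of p UNIV UNIV "\<lambda>i. v $ i * w $ i"] assms by simp
    then show "(\<chi> i. v $ p i) \<bullet> (\<chi> i. w $ p i) = v \<bullet> w" by (simp add: inner_vec_def)
  qed
qed

lemma sumsq_norm: "(\<Sum>a\<in>UNIV. (x::real^'n)$a * x$a) = (norm x)\<^sup>2"
  by (simp add: power2_norm_eq_inner inner_vec_def)

lemma integrable_prod2:
  assumes U: "uniform_sphere_measure \<nu> U"
  shows "integrable U (\<lambda>x::real^'n. x$j * x$k)"
proof -
  interpret prob_space U using U by (simp add: uniform_sphere_measure_def)
  have "AE x in U. norm (x$j * x$k) \<le> \<nu> * \<nu>"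
    using AE_sphere[OF U]
  proof eventually_elim
    case (elim x)
    have "\<bar>x$j\<bar> \<le> \<nu>" "\<bar>x$k\<bar> \<le> \<nu>" using component_le_norm_cart[of x] elim by auto
    then show ?case by (simp add: abs_mult mult_mono')
  qed
  moreover have "(\<lambda>x::real^'n. x$j * x$k) \<in> borel_measurable U"
  proof -
    have b: "(\<lambda>x::real^'n. x$j * x$k) \<in> borel_measurable borel" by simp
    then show ?thesis using measurable_cong_sets[OF sets_U[OF U] refl] by blast
  qed
  ultimately show ?thesis by (rule integrable_const_bound)
qed

lemma second_moment:
  assumes U: "uniform_sphere_measure \<nu> U"
  shows "(\<integral> x. (x::real^'n)$j * x$k \<partial>U) = (if j = k then \<nu>\<^sup>2 / CARD('n) else 0)"
proof -
  interpret prob_space U using U by (simp add: uniform_sphere_measure_def)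
  have mb: "(\<lambda>x::real^'n. x$a * x$b) \<in> borel_measurable borel" for a b by simp
  have off: "(\<integral> x. (x::real^'n)$a * x$b \<partial>U) = 0" if "a \<noteq> b" for a b
  proof -
    have "(\<integral> x. (x::real^'n)$a * x$b \<partial>U) = (\<integral> x. (\<chi> i. if i = a then - x$i else x$i)$a * (\<chi> i. if i = a then - x$i else (x::real^'n)$i)$b \<partial>U)"
      by (rule inv_integral[OF U ot_flip mb])
    also have "\<dots> = - (\<integral> x. (x::real^'n)$a * x$b \<partial>U)" using that by simp
    finally show ?thesis by simp
  qed
  have eq: "(\<integral> x. (x::real^'n)$a * x$a \<partial>U) = (\<integral> x. (x::real^'n)$b * x$b \<partial>U)" for a b
  proof -
    let ?p = "Transposition.transpose a b"
    have "(\<integral> x. (x::real^'n)$b * x$b \<partial>U) = (\<integral> x. (\<chi> i. x $ ?p i)$b * (\<chi> i. (x::real^'n) $ ?p i)$b \<partial>U)"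
      by (rule inv_integral[OF U ot_perm mb]) simp
    then show ?thesis by simp
  qed
  have "(\<Sum>a\<in>UNIV. (\<integral> x. (x::real^'n)$a * x$a \<partial>U)) = (\<integral> x. (\<Sum>a\<in>UNIV. (x::real^'n)$a * x$a) \<partial>U)"
    using integral_sum[of UNIV "\<lambda>a x. (x::real^'n)$a * x$a"] integrable_prod2[OF U] by simp
  also have "\<dots> = (\<integral> x. \<nu>\<^sup>2 \<partial>U)"
  proof (rule integral_cong_AE)
    show "AE x in U. (\<Sum>a\<in>UNIV. (x::real^'n)$a * x$a) = \<nu>\<^sup>2"
      using AE_sphere[OF U] by eventually_elim (simp add: sumsq_norm)
  qed (simp_all add: measurable_cong_sets[OF sets_U[OF U] refl])
  also have "\<dots> = \<nu>\<^sup>2" by (simp add: prob_space)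
  finally have S: "(\<Sum>a\<in>UNIV. (\<integral> x. (x::real^'n)$a * x$a \<partial>U)) = \<nu>\<^sup>2" .
  have "(\<Sum>a\<in>UNIV. (\<integral> x. (x::real^'n)$a * x$a \<partial>U)) = (\<Sum>a\<in>(UNIV::'n set). (\<integral> x. (x::real^'n)$j * x$j \<partial>U))"
    by (rule sum.cong) (auto intro: eq)
  then have "CARD('n) * (\<integral> x. (x::real^'n)$j * x$j \<partial>U) = \<nu>\<^sup>2"
    using S by simp
  then show ?thesis using off[of j k] by (auto simp: field_simps)
qed

lemma proj_quad:
  fixes A :: "real^'n^'n"
  assumes sym: "transpose A = A" and idem: "A ** A = A"
  obtains B where "finite B" "card B = rank A" "\<And>b. b \<in> B \<Longrightarrow> norm b = 1"
    "\<And>x. x \<bullet> (A *v x) = (\<Sum>b\<in>B. (b \<bullet> x)\<^sup>2)"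
proof -
  let ?S = "range (\<lambda>x. A *v x)"
  have lin: "linear (\<lambda>x. A *v x)" by (simp add: matrix_vector_mul_linear)
  have sub: "subspace ?S" using linear_subspace_image[OF lin subspace_UNIV] by simp
  obtain B where BS: "B \<subseteq> ?S" and orth: "pairwise orthogonal B"
    and nb: "\<And>x. x \<in> B \<Longrightarrow> norm x = 1" and ind: "independent B"
    and cB: "card B = dim ?S" and spB: "span B = ?S"
    by (rule orthonormal_basis_subspace[OF sub]) blast
  have fin: "finite B" using ind by (rule finiteI_independent)
  have fixb: "A *v b = b" if "b \<in> B" for b
  proof -
    have "b \<in> range (\<lambda>x. A *v x)" using BS that by blast
    then obtain c where "b = A *v c" by blast
    then show ?thesis by (simp add: matrix_vector_mul_assoc idem)
  qed
  have bb: "b \<bullet> b = 1" if "b \<in> B" for b using nb[OF that] by (simp add: norm_eq_1)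
  have bo: "b \<bullet> b' = 0" if "b \<in> B" "b' \<in> B" "b \<noteq> b'" for b b'
    using orth that by (auto simp: pairwise_def orthogonal_def)
  have sa: "b \<bullet> (A *v y) = b \<bullet> y" if "b \<in> B" for b y
  proof -
    have "b \<bullet> (A *v y) = (b v* A) \<bullet> y" by (simp add: dot_lmul_matrix)
    also have "b v* A = transpose A *v b" by simp
    also have "\<dots> = b" using sym fixb[OF that] by simp
    finally show ?thesis .
  qed
  have exp: "A *v y = (\<Sum>b\<in>B. (b \<bullet> y) *\<^sub>R b)" for y
  proof -
    define z where "z = A *v y - (\<Sum>b\<in>B. (b \<bullet> y) *\<^sub>R b)"
    have zs: "z \<in> span B"
    proof -
      have "A *v y \<in> span B" using spB by auto
      moreover have "(\<Sum>b\<in>B. (b \<bullet> y) *\<^sub>R b) \<in> span B"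
        by (intro span_sum span_scale span_base)
      ultimately show ?thesis unfolding z_def by (rule span_diff)
    qed
    have zo: "orthogonal z b'" if "b' \<in> B" for b'
    proof -
      have "(\<Sum>b\<in>B. (b \<bullet> y) *\<^sub>R b) \<bullet> b' = (\<Sum>b\<in>B. (b \<bullet> y) * (b \<bullet> b'))"
        by (simp add: inner_sum_left)
      also have "\<dots> = (\<Sum>b\<in>{b'}. (b \<bullet> y) * (b \<bullet> b'))"
        using that fin by (intro sum.mono_neutral_right) (auto simp: bo)
      also have "\<dots> = b' \<bullet> y" using bb[OF that] by simp
      finally show ?thesis using sa[OF that] unfolding z_def orthogonal_def
        by (simp add: inner_diff_right inner_commute)
    qed
    have "orthogonal z z" by (rule orthogonal_to_span[OF zs zo])
    then have "z = 0" by (simp add: orthogonal_def)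
    then show ?thesis unfolding z_def by simp
  qed
  have "x \<bullet> (A *v x) = (\<Sum>b\<in>B. (b \<bullet> x)\<^sup>2)" for x
    by (simp add: exp[of x] inner_sum_right power2_eq_square inner_commute)
  moreover have "card B = rank A" using cB rank_dim_range by metis
  ultimately show ?thesis using that fin nb by blast
qed

lemma quad_expand: "(b \<bullet> (x::real^'n))\<^sup>2 = (\<Sum>j\<in>UNIV. \<Sum>k\<in>UNIV. (b$j * b$k) * (x$j * x$k))"
  by (simp add: inner_vec_def power2_eq_square sum_product algebra_simps)

lemma quad_moment:
  assumes U: "uniform_sphere_measure \<nu> U"
  shows "integrable U (\<lambda>x. (b \<bullet> (x::real^'n))\<^sup>2)"
    "(\<integral> x. (b \<bullet> (x::real^'n))\<^sup>2 \<partial>U) = \<nu>\<^sup>2 / CARD('n) * (norm b)\<^sup>2"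
proof -
  have i: "integrable U (\<lambda>x. (b$j * b$k) * ((x::real^'n)$j * x$k))" for j k
    using integrable_prod2[OF U] by simp
  show "integrable U (\<lambda>x. (b \<bullet> (x::real^'n))\<^sup>2)"
    unfolding quad_expand using i by (intro Bochner_Integration.integrable_sum) auto
  have "(\<integral> x. (b \<bullet> (x::real^'n))\<^sup>2 \<partial>U) = (\<Sum>j\<in>UNIV. \<Sum>k\<in>UNIV. (b$j * b$k) * (\<integral> x. (x::real^'n)$j * x$k \<partial>U))"
    unfolding quad_expand using i integrable_prod2[OF U]
    by (simp add: integral_sum Bochner_Integration.integrable_sum)
  also have "\<dots> = (\<Sum>j\<in>UNIV. (b$j * b$j) * (\<nu>\<^sup>2 / CARD('n)))"
    by (simp add: second_moment[OF U] if_distrib cong: if_cong)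
  also have "\<dots> = \<nu>\<^sup>2 / CARD('n) * (norm b)\<^sup>2"
    by (simp add: sumsq_norm[symmetric] sum_distrib_left algebra_simps)
  finally show "(\<integral> x. (b \<bullet> (x::real^'n))\<^sup>2 \<partial>U) = \<nu>\<^sup>2 / CARD('n) * (norm b)\<^sup>2" .
qed

lemma residual:
  fixes A :: "real^'n^'n"
  assumes U: "uniform_sphere_measure \<nu> U"
    and sym: "transpose A = A" and idem: "A ** A = A" and rk: "rank A = m"
  shows "(\<integral>\<^sup>+ x. ennreal ((norm (x - A *v x))\<^sup>2) \<partial>U) = ennreal (\<nu>\<^sup>2 * (1 - real m / CARD('n)))"
proof -
  interpret prob_space U using U by (simp add: uniform_sphere_measure_def)
  obtain B where fin: "finite B" and cB: "card B = rank A" and nb: "\<And>b. b \<in> B \<Longrightarrow> norm b = 1"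
    and q: "\<And>x. x \<bullet> (A *v x) = (\<Sum>b\<in>B. (b \<bullet> x)\<^sup>2)"
    by (rule proj_quad[OF sym idem]) blast
  have aa: "(A *v x) \<bullet> (A *v x) = (A *v x) \<bullet> x" for x
  proof -
    have "(A *v x) \<bullet> (A *v x) = ((A *v x) v* A) \<bullet> x" by (simp add: dot_lmul_matrix)
    also have "(A *v x) v* A = transpose A *v (A *v x)" by simp
    also have "\<dots> = A *v x" using sym idem by (simp add: matrix_vector_mul_assoc)
    finally show ?thesis .
  qed
  have pw: "(norm (x - A *v x))\<^sup>2 = (\<Sum>a\<in>UNIV. x$a * x$a) - (\<Sum>b\<in>B. (b \<bullet> x)\<^sup>2)" for x
  proof -
    have "(norm (x - A *v x))\<^sup>2 = x \<bullet> x - 2 * (x \<bullet> (A *v x)) + (A *v x) \<bullet> (A *v x)"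
      by (simp add: power2_norm_eq_inner inner_diff_left inner_diff_right inner_commute)
    also have "\<dots> = x \<bullet> x - x \<bullet> (A *v x)" using aa[of x] by (simp add: inner_commute)
    finally show ?thesis using q[of x] by (simp add: sumsq_norm power2_norm_eq_inner)
  qed
  have i1: "integrable U (\<lambda>x. \<Sum>a\<in>UNIV. (x::real^'n)$a * x$a)"
    using integrable_prod2[OF U] by (intro Bochner_Integration.integrable_sum) auto
  have i2: "integrable U (\<lambda>x. \<Sum>b\<in>B. (b \<bullet> (x::real^'n))\<^sup>2)"
    using quad_moment(1)[OF U] by (intro Bochner_Integration.integrable_sum) auto
  have e1: "(\<integral> x. (\<Sum>a\<in>UNIV. (x::real^'n)$a * x$a) \<partial>U) = \<nu>\<^sup>2"
  proof -
    have "(\<integral> x. (\<Sum>a\<in>UNIV. (x::real^'n)$a * x$a) \<partial>U) = (\<integral> x. \<nu>\<^sup>2 \<partial>U)"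
    proof (rule integral_cong_AE)
      show "AE x in U. (\<Sum>a\<in>UNIV. (x::real^'n)$a * x$a) = \<nu>\<^sup>2"
        using AE_sphere[OF U] by eventually_elim (simp add: sumsq_norm)
    qed (simp_all add: measurable_cong_sets[OF sets_U[OF U] refl])
    also have "\<dots> = \<nu>\<^sup>2" by (simp add: prob_space)
    finally show ?thesis .
  qed
  have e2: "(\<integral> x. (\<Sum>b\<in>B. (b \<bullet> (x::real^'n))\<^sup>2) \<partial>U) = real m * (\<nu>\<^sup>2 / CARD('n))"
  proof -
    have "(\<integral> x. (\<Sum>b\<in>B. (b \<bullet> (x::real^'n))\<^sup>2) \<partial>U) = (\<Sum>b\<in>B. \<integral> x. (b \<bullet> (x::real^'n))\<^sup>2 \<partial>U)"
      using quad_moment(1)[OF U] by (simp add: integral_sum)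
    also have "\<dots> = (\<Sum>b\<in>B. \<nu>\<^sup>2 / CARD('n))"
      by (rule sum.cong) (simp_all add: quad_moment(2)[OF U] nb)
    also have "\<dots> = real m * (\<nu>\<^sup>2 / CARD('n))" using cB rk by simp
    finally show ?thesis .
  qed
  have ir: "integrable U (\<lambda>x. (norm (x - A *v x))\<^sup>2)"
    unfolding pw using i1 i2 by (rule Bochner_Integration.integrable_diff)
  have "(\<integral>\<^sup>+ x. ennreal ((norm (x - A *v x))\<^sup>2) \<partial>U) = ennreal (\<integral> x. (norm (x - A *v x))\<^sup>2 \<partial>U)"
    by (rule nn_integral_eq_integral[OF ir]) simp
  also have "(\<integral> x. (norm (x - A *v x))\<^sup>2 \<partial>U) = \<nu>\<^sup>2 * (1 - real m / CARD('n))"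
    unfolding pw using i1 i2 e1 e2 by (simp add: Bochner_Integration.integral_diff algebra_simps)
  finally show ?thesis .
qed


lemma mv_meas: "(\<lambda>p::(real^'n) \<times> (real^'n^'n). snd p *v fst p) \<in> borel_measurable (borel \<Otimes>\<^sub>M borel)"
  unfolding borel_prod matrix_vector_mult_def
  by (intro borel_measurable_continuous_onI continuous_on_vec_lambda continuous_intros)

lemma joint_meas:
  fixes T :: "'r \<Rightarrow> real^'n^'n \<Rightarrow> real^'n \<Rightarrow> real^'n"
  assumes Tm: "(\<lambda>(r, A, y). T r A y) \<in> borel_measurable (R \<Otimes>\<^sub>M (borel \<Otimes>\<^sub>M borel))"
  shows "(\<lambda>(p, r). ennreal ((norm (T r (snd p) (snd p *v fst p) - fst p))\<^sup>2))
     \<in> borel_measurable ((borel \<Otimes>\<^sub>M borel) \<Otimes>\<^sub>M R)"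
proof -
  have phi: "(\<lambda>(p::(real^'n) \<times> (real^'n^'n), r). (r, snd p, snd p *v fst p)) \<in> measurable ((borel \<Otimes>\<^sub>M borel) \<Otimes>\<^sub>M R) (R \<Otimes>\<^sub>M (borel \<Otimes>\<^sub>M borel))"
    using mv_meas by measurable
  have "(\<lambda>(p::(real^'n) \<times> (real^'n^'n), r). T r (snd p) (snd p *v fst p)) \<in> borel_measurable ((borel \<Otimes>\<^sub>M borel) \<Otimes>\<^sub>M R)"
    using measurable_compose[OF phi Tm] by (simp add: split_beta')
  then show ?thesis by measurable
qed

lemma slice_meas:
  fixes T :: "'r \<Rightarrow> real^'n^'n \<Rightarrow> real^'n \<Rightarrow> real^'n"
  assumes Tm: "(\<lambda>(r, A, y). T r A y) \<in> borel_measurable (R \<Otimes>\<^sub>M (borel \<Otimes>\<^sub>M borel))"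
  shows "(\<lambda>r. T r A y) \<in> borel_measurable R"
proof -
  have "(\<lambda>r. (r, A, y)) \<in> measurable R (R \<Otimes>\<^sub>M (borel \<Otimes>\<^sub>M borel))" by measurable
  from measurable_compose[OF this Tm] show ?thesis by simp
qed
lemma parallelo_ineq:
  fixes t x a :: "real^'n"
  shows "(norm (t - x))\<^sup>2 + (norm (t - (2 *\<^sub>R a - x)))\<^sup>2 \<ge> 2 * (norm (x - a))\<^sup>2"
proof -
  have "(norm (t - x))\<^sup>2 + (norm (t - (2 *\<^sub>R a - x)))\<^sup>2 = 2 * (norm (t - a))\<^sup>2 + 2 * (norm (x - a))\<^sup>2"
    by (simp add: power2_norm_eq_inner inner_diff_left inner_diff_right inner_add_left inner_add_right inner_commute algebra_simps)
  then show ?thesis by simp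
qed

lemma lower_fixed_A:
  fixes A :: "real^'n^'n" and T :: "'r \<Rightarrow> real^'n^'n \<Rightarrow> real^'n \<Rightarrow> real^'n"
  assumes U: "uniform_sphere_measure \<nu> U" and R: "prob_space R"
    and sym: "transpose A = A" and idem: "A ** A = A" and rk: "rank A = m"
    and Tr: "\<And>y. (\<lambda>r. T r A y) \<in> borel_measurable R"
    and hm: "(\<lambda>x. \<integral>\<^sup>+ r. ennreal ((norm (T r A (A *v x) - x))\<^sup>2) \<partial>R) \<in> borel_measurable borel"
  shows "(\<integral>\<^sup>+ x. (\<integral>\<^sup>+ r. ennreal ((norm (T r A (A *v x) - x))\<^sup>2) \<partial>R) \<partial>U) \<ge> ennreal (\<nu>\<^sup>2 * (1 - real m / CARD('n)))"
proof -
  interpret R: prob_space R by (rule R)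
  define h where "h x = (\<integral>\<^sup>+ r. ennreal ((norm (T r A (A *v x) - x))\<^sup>2) \<partial>R)" for x
  define Q where "Q x = 2 *\<^sub>R (A *v x) - x" for x :: "real^'n"
  have AA: "A *v (A *v x) = A *v x" for x using idem by (simp add: matrix_vector_mul_assoc)
  have AtA: "(A *v x) \<bullet> y = x \<bullet> (A *v y)" for x y
  proof -
    have "x \<bullet> (A *v y) = (x v* A) \<bullet> y" by (simp add: dot_lmul_matrix)
    also have "x v* A = transpose A *v x" by simp
    finally show ?thesis using sym by simp
  qed
  have linA: "linear (\<lambda>x. A *v x)" by (simp add: matrix_vector_mul_linear)
  have linQ: "linear Q" unfolding Q_def
    using linA by (intro linearI) (simp_all add: linear_add linear_scale algebra_simps)
  have otQ: "orthogonal_transformation Q"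
    unfolding orthogonal_transformation_def
  proof (intro conjI linQ allI)
    fix v w
    have "Q v \<bullet> Q w = 4 * ((A *v v) \<bullet> (A *v w)) - 2 * ((A *v v) \<bullet> w) - 2 * (v \<bullet> (A *v w)) + v \<bullet> w"
      unfolding Q_def by (simp add: inner_diff_left inner_diff_right algebra_simps)
    also have "(A *v v) \<bullet> (A *v w) = v \<bullet> (A *v w)" using AtA[of v "A *v w"] AA by simp
    also have "(A *v v) \<bullet> w = v \<bullet> (A *v w)" by (rule AtA)
    finally show "Q v \<bullet> Q w = v \<bullet> w" by simp
  qed
  have AQ: "A *v Q x = A *v x" for x
    unfolding Q_def using linear_scale[OF linA, of 2 "A *v x"] by (simp add: matrix_vector_mult_diff_distrib AA scaleR_2)
  have Qm: "Q \<in> borel_measurable borel" by (rule meas_lin[OF linQ])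
  have hmU: "f \<in> borel_measurable U" if "f \<in> borel_measurable borel" for f :: "real^'n \<Rightarrow> ennreal"
    using that measurable_cong_sets[OF sets_U[OF U] refl] by blast
  have nm: "(\<lambda>x. (norm (x - A *v x))\<^sup>2) \<in> borel_measurable U"
  proof -
    have "(\<lambda>x. (norm (x - A *v x))\<^sup>2) \<in> borel_measurable borel"
      using meas_lin[OF linA] by measurable
    then show ?thesis using measurable_cong_sets[OF sets_U[OF U] refl] by blast
  qed
  have hQm: "(\<lambda>x. h (Q x)) \<in> borel_measurable borel"
    using measurable_compose[OF Qm hm[folded h_def]] by simp
  have pt: "h x + h (Q x) \<ge> ennreal (2 * (norm (x - A *v x))\<^sup>2)" for x
  proof -
    have "h x + h (Q x) = (\<integral>\<^sup>+ r. ennreal ((norm (T r A (A *v x) - x))\<^sup>2) + ennreal ((norm (T r A (A *v x) - Q x))\<^sup>2) \<partial>R)"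
      unfolding h_def AQ using Tr[of "A *v x"] by (subst nn_integral_add) auto
    also have "\<dots> \<ge> (\<integral>\<^sup>+ r. ennreal (2 * (norm (x - A *v x))\<^sup>2) \<partial>R)"
    proof (rule nn_integral_mono)
      fix r
      have "2 * (norm (x - A *v x))\<^sup>2 \<le> (norm (T r A (A *v x) - x))\<^sup>2 + (norm (T r A (A *v x) - Q x))\<^sup>2"
        unfolding Q_def by (rule parallelo_ineq)
      then show "ennreal (2 * (norm (x - A *v x))\<^sup>2) \<le> ennreal ((norm (T r A (A *v x) - x))\<^sup>2) + ennreal ((norm (T r A (A *v x) - Q x))\<^sup>2)"
        by (simp add: ennreal_plus[symmetric] del: ennreal_plus)
    qed
    also have "(\<integral>\<^sup>+ r. ennreal (2 * (norm (x - A *v x))\<^sup>2) \<partial>R) = ennreal (2 * (norm (x - A *v x))\<^sup>2)"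
      by (simp add: R.emeasure_space_1)
    finally show ?thesis .
  qed
  have "ennreal 2 * ennreal (\<nu>\<^sup>2 * (1 - real m / CARD('n))) = ennreal 2 * (\<integral>\<^sup>+ x. ennreal ((norm (x - A *v x))\<^sup>2) \<partial>U)"
    using residual[OF U sym idem rk] by simp
  also have "\<dots> = (\<integral>\<^sup>+ x. ennreal (2 * (norm (x - A *v x))\<^sup>2) \<partial>U)"
    by (subst nn_integral_cmult[symmetric]) (auto simp: ennreal_mult intro!: nm)
  also have "\<dots> \<le> (\<integral>\<^sup>+ x. h x + h (Q x) \<partial>U)"
    by (rule nn_integral_mono) (rule pt)
  also have "\<dots> = (\<integral>\<^sup>+ x. h x \<partial>U) + (\<integral>\<^sup>+ x. h (Q x) \<partial>U)"
    by (rule nn_integral_add) (auto intro!: hmU hQm hm[folded h_def])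
  also have "(\<integral>\<^sup>+ x. h (Q x) \<partial>U) = (\<integral>\<^sup>+ x. h x \<partial>U)"
    by (rule inv_nn_integral[OF U otQ hm[folded h_def], symmetric])
  also have "(\<integral>\<^sup>+ x. h x \<partial>U) + (\<integral>\<^sup>+ x. h x \<partial>U) = ennreal 2 * (\<integral>\<^sup>+ x. h x \<partial>U)"
    by (simp add: mult_2[symmetric])
  finally have "ennreal 2 * ennreal (\<nu>\<^sup>2 * (1 - real m / CARD('n))) \<le> ennreal 2 * (\<integral>\<^sup>+ x. h x \<partial>U)" .
  then show ?thesis unfolding h_def by (subst (asm) ennreal_mult_le_mult_iff) auto
qed

theorem lemma5:
  fixes m :: nat and \<nu> :: real
    and U :: "(real^'n) measure" and P :: "(real^'n^'n) measure" and R :: "'r measure"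
  assumes "1 \<le> m" and "m \<le> CARD('n)" and "\<nu> > 0"
    and "uniform_sphere_measure \<nu> U"
    and "uniform_proj_measure m P"
    and "prob_space R"
  shows "(INF T\<in>estimators R. SUP x\<in>sphere 0 \<nu>. risk R P T x)
           \<ge> (INF T\<in>estimators R. \<integral>\<^sup>+ x. risk R P T x \<partial>U)
       \<and> (INF T\<in>estimators R. \<integral>\<^sup>+ x. risk R P T x \<partial>U)
           \<ge> ennreal (\<nu>\<^sup>2 * (1 - real m / real CARD('n)))"
proof
  note U = assms(4) and Pu = assms(5) and R = assms(6)
  interpret Up: prob_space U using U by (simp add: uniform_sphere_measure_def)
  interpret Pp: prob_space P using Pu by (simp add: uniform_proj_measure_def)
  interpret Rp: prob_space R by (rule R)
  show "(INF T\<in>estimators R. SUP x\<in>sphere 0 \<nu>. risk R P T x)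
           \<ge> (INF T\<in>estimators R. \<integral>\<^sup>+ x. risk R P T x \<partial>U)"
  proof (rule INF_mono)
    fix T :: "'r \<Rightarrow> real^'n^'n \<Rightarrow> real^'n \<Rightarrow> real^'n" assume T: "T \<in> estimators R"
    have "(\<integral>\<^sup>+ x. risk R P T x \<partial>U) \<le> (\<integral>\<^sup>+ x. (SUP x\<in>sphere 0 \<nu>. risk R P T x) \<partial>U)"
    proof (rule nn_integral_mono_AE)
      show "AE x in U. risk R P T x \<le> (SUP x\<in>sphere 0 \<nu>. risk R P T x)"
        using AE_sphere[OF U] by eventually_elim (auto intro: SUP_upper)
    qed
    also have "\<dots> = (SUP x\<in>sphere 0 \<nu>. risk R P T x)" by (simp add: Up.emeasure_space_1)
    finally show "\<exists>T'\<in>estimators R. (\<integral>\<^sup>+ x. risk R P T' x \<partial>U) \<le> (SUP x\<in>sphere 0 \<nu>. risk R P T x)"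
      using T by blast
  qed
  show "(INF T\<in>estimators R. \<integral>\<^sup>+ x. risk R P T x \<partial>U) \<ge> ennreal (\<nu>\<^sup>2 * (1 - real m / real CARD('n)))"
  proof (rule INF_greatest)
    fix T :: "'r \<Rightarrow> real^'n^'n \<Rightarrow> real^'n \<Rightarrow> real^'n" assume "T \<in> estimators R"
    then have Tm: "(\<lambda>(r, A, y). T r A y) \<in> borel_measurable (R \<Otimes>\<^sub>M (borel \<Otimes>\<^sub>M borel))"
      by (simp add: estimators_def)
    define F where "F x A = (\<integral>\<^sup>+ r. ennreal ((norm (T r A (A *v x) - x))\<^sup>2) \<partial>R)" for x A
    have Fm: "(\<lambda>p. F (fst p) (snd p)) \<in> borel_measurable (borel \<Otimes>\<^sub>M borel)"
      unfolding F_def using Rp.borel_measurable_nn_integral[OF joint_meas[OF Tm]] by simp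
    have sUP: "sets (U \<Otimes>\<^sub>M P) = sets (borel \<Otimes>\<^sub>M borel)"
      by (rule sets_pair_measure_cong) (use U Pu in \<open>simp_all add: uniform_sphere_measure_def uniform_proj_measure_def\<close>)
    have FmUP: "case_prod F \<in> borel_measurable (U \<Otimes>\<^sub>M P)"
      using Fm by (simp add: split_beta' measurable_cong_sets[OF sUP refl])
    interpret UP: pair_sigma_finite U P
      by (intro pair_sigma_finite.intro Up.sigma_finite_measure Pp.sigma_finite_measure)
    have "(\<integral>\<^sup>+ x. risk R P T x \<partial>U) = (\<integral>\<^sup>+ x. (\<integral>\<^sup>+ A. F x A \<partial>P) \<partial>U)"
      by (simp add: risk_def F_def)
    also have "\<dots> = (\<integral>\<^sup>+ A. (\<integral>\<^sup>+ x. F x A \<partial>U) \<partial>P)"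
      by (rule UP.Fubini'[OF FmUP, symmetric])
    also have "\<dots> \<ge> (\<integral>\<^sup>+ A. ennreal (\<nu>\<^sup>2 * (1 - real m / real CARD('n))) \<partial>P)"
    proof (rule nn_integral_mono_AE)
      have "Pp.prob (rank_proj m) = 1"
        using Pu by (simp add: uniform_proj_measure_def measure_def)
      then have "AE A in P. A \<in> rank_proj m" by (rule Pp.AE_prob_1)
      then show "AE A in P. ennreal (\<nu>\<^sup>2 * (1 - real m / real CARD('n))) \<le> (\<integral>\<^sup>+ x. F x A \<partial>U)"
      proof eventually_elim
        case (elim A)
        then have sym: "transpose A = A" and idem: "A ** A = A" and rk: "rank A = m"
          by (auto simp: rank_proj_def)
        have hm: "(\<lambda>x. F x A) \<in> borel_measurable borel"
          using measurable_compose[OF measurable_Pair2'[of A borel borel] Fm] by simp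
        show ?case unfolding F_def
          by (rule lower_fixed_A[OF U R sym idem rk slice_meas[OF Tm]]) (use hm in \<open>simp add: F_def\<close>)
      qed
    qed
    also have "(\<integral>\<^sup>+ A. ennreal (\<nu>\<^sup>2 * (1 - real m / real CARD('n))) \<partial>P) = ennreal (\<nu>\<^sup>2 * (1 - real m / real CARD('n)))"
      by (simp add: Pp.emeasure_space_1)
    finally show "ennreal (\<nu>\<^sup>2 * (1 - real m / real CARD('n))) \<le> (\<integral>\<^sup>+ x. risk R P T x \<partial>U)" .
  qed
qed


end
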